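(* Let $\mathbb{G}\subset\mathbb{N}$ be a finite set with $0\in\mathbb{G}$, let $\ell\in\mathbb{N}$, and define the symmetric array $$\mathbb{S}=\mathbb{S}(\mathbb{G},\ell)\triangleq\mathbb{G}\cup(\max\mathbb{G}-\mathbb{G}+\ell).$$ If $\mathbb{G}-\mathbb{G}\supseteq[0:\max\mathbb{G}]$ and $\mathbb{G}+\mathbb{G}\supseteq[0:\ell-1]$, then $\mathbb{S}+\mathbb{S}=[0:2\max\mathbb{S}]$.
   Context: For finite sets $\mathbb{A},\mathbb{B}\subset\mathbb{Z}$ and $c\in\mathbb{Z}$: $\mathbb{A}+\mathbb{B}=\{a+b: a\in\mathbb{A},b\in\mathbb{B}\}$, $\mathbb{A}-\mathbb{B}=\{a-b: a\in\mathbb{A},b\in\mathbb{B}\}$, $c-\mathbb{A}=\{c-a:a\in\mathbb{A}\}$, $\mathbb{A}+c=\{a+c:a\in\mathbb{A}\}$. For $a,b\in\mathbb{R}$, $[a:b]=\{c\in\mathbb{Z}: a\le c\le b\}$ (empty if $b<a$). $\mathbb{N}$ includes $0$. *)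

theory Defs
  imports Main
begin

definition sumset :: "int set \<Rightarrow> int set \<Rightarrow> int set" where
  "sumset A B = {a + b | a b. a \<in> A \<and> b \<in> B}"

definition diffset :: "int set \<Rightarrow> int set \<Rightarrow> int set" where
  "diffset A B = {a - b | a b. a \<in> A \<and> b \<in> B}"

definition symarray :: "int set \<Rightarrow> int \<Rightarrow> int set" where
  "symarray G l = G \<union> {Max G - g + l | g. g \<in> G}"

end

theory Submission
  imports Defs
begin

theorem theorem1:
  fixes G :: "int set" and l :: nat
  assumes "finite G" and "\<forall>g\<in>G. 0 \<le> g" and "0 \<in> G"
    and "{0..Max G} \<subseteq> diffset G G"
    and "{0..int l - 1} \<subseteq> sumset G G"
  shows "sumset (symarray G (int l)) (symarray G (int l)) = {0..2 * Max (symarray G (int l))}"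
proof -
  define M where "M = Max G"
  define S where "S = symarray G (int l)"
  have GM: "\<And>g. g \<in> G \<Longrightarrow> 0 \<le> g \<and> g \<le> M"
    using assms(1,2) M_def by auto
  have M0: "0 \<le> M" using GM assms(3) by blast
  have Sd: "S = G \<union> {M - g + int l | g. g \<in> G}" unfolding S_def symarray_def M_def ..
  have Sb: "\<And>x. x \<in> S \<Longrightarrow> 0 \<le> x \<and> x \<le> M + int l"
    unfolding Sd using GM by fastforce
  have MS: "M + int l \<in> S" unfolding Sd using assms(3) by force
  have fS: "finite S" unfolding Sd using assms(1) by auto
  have MaxS: "Max S = M + int l"
    using fS MS Sb by (meson Max_eqI)
  have GS: "\<And>g. g \<in> G \<Longrightarrow> g \<in> S" unfolding Sd by blast
  have HS: "\<And>g. g \<in> G \<Longrightarrow> M - g + int l \<in> S" unfolding Sd by blast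
  have dif: "\<And>d. 0 \<le> d \<Longrightarrow> d \<le> M \<Longrightarrow> \<exists>a b. a \<in> G \<and> b \<in> G \<and> d = a - b"
    using assms(4) unfolding diffset_def M_def by (smt (verit) atLeastAtMost_iff mem_Collect_eq subsetD)
  have sm: "\<And>d. 0 \<le> d \<Longrightarrow> d \<le> int l - 1 \<Longrightarrow> \<exists>a b. a \<in> G \<and> b \<in> G \<and> d = a + b"
    using assms(5) unfolding sumset_def by (smt (verit) atLeastAtMost_iff mem_Collect_eq subsetD)
  have "sumset S S = {0..2 * (M + int l)}"
  proof
    show "sumset S S \<subseteq> {0..2 * (M + int l)}"
    proof
      fix x assume "x \<in> sumset S S"
      then obtain a b where "a \<in> S" "b \<in> S" "x = a + b" unfolding sumset_def by blast
      then show "x \<in> {0..2 * (M + int l)}" using Sb[of a] Sb[of b] by simp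
    qed
  next
    show "{0..2 * (M + int l)} \<subseteq> sumset S S"
    proof
      fix n assume n: "n \<in> {0..2 * (M + int l)}"
      have "\<exists>x y. x \<in> S \<and> y \<in> S \<and> n = x + y"
      proof (cases "n < int l")
        case True
        then obtain a b where "a \<in> G" "b \<in> G" "n = a + b" using sm n by force
        then show ?thesis using GS by blast
      next
        case F1: False
        show ?thesis
        proof (cases "n \<le> 2 * M + int l")
          case True
          show ?thesis
          proof (cases "n - M - int l \<ge> 0")
            case True
            then obtain a b where "a \<in> G" "b \<in> G" "n - M - int l = a - b"
              using dif[of "n - M - int l"] \<open>n \<le> 2 * M + int l\<close> by auto
            then show ?thesis using GS HS by (metis add_diff_eq diff_add_cancel diff_diff_eq2 add.commute)
          next
            case False
            then obtain a b where "a \<in> G" "b \<in> G" "M + int l - n = a - b"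
              using dif[of "M + int l - n"] F1 by auto
            then have "n = b + (M - a + int l)" by simp
            then show ?thesis using GS HS \<open>a \<in> G\<close> \<open>b \<in> G\<close> by blast
          qed
        next
          case False
          then obtain a b where "a \<in> G" "b \<in> G" "2 * (M + int l) - n = a + b"
            using sm[of "2 * (M + int l) - n"] n by auto
          then have "n = (M - a + int l) + (M - b + int l)" by simp
          then show ?thesis using HS \<open>a \<in> G\<close> \<open>b \<in> G\<close> by blast
        qed
      qed
      then show "n \<in> sumset S S" unfolding sumset_def by blast
    qed
  qed
  then show ?thesis using MaxS S_def by simp
qed

end
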